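(* Let $\lambda$ be a partition of $n$, let $t=\lambda_2-1$ and $s=\lambda_1-1$, and for $1\le k\le t$ let $b_k=\lambda'_1+\cdots+\lambda'_k-k+1$ (the entry in the top cell of column $k$ of the regular filling). Then $\mathcal{I}_\lambda$ is generated by the union of the following sets: (column 0) $e_1(n),\dots,e_{\ell(\lambda)-1}(n)$ (here $\ell(\lambda)=\lambda'_1=b_1$); (column $k$, for each $1\le k\le t$) $e_{b_k}(n-k)$; (last column, only if $s>t$) $e_{n-s}(n-s)$, i.e. all square-free monomials of degree $n-s$. Moreover, the same remains a generating set if the set $e_{b_1}(n-1)$ is replaced by $\{x_1^{b_1},\dots,x_n^{b_1}\}$. If $\lambda=(1^n)$ is the one-column partition, one also adds the element $e_n(n)=x_1\cdots x_n$ to this generating set; if $\lambda=(n)$ is the one-row partition, $\mathcal{I}_{(n)}=(x_1,\dots,x_n)$.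
   Context: $k$ is a field of characteristic $0$ and $R=k[x_1,\dots,x_n]$. For a set $S$ of variables, $e_r(S)$ is the $r$-th elementary symmetric polynomial in the variables of $S$ ($e_0=1$, and $e_r(S)=0$ if $r>|S|$). For $1\le m\le n$, $e_r(m)$ denotes the set $\{e_r(S): S\subseteq\{x_1,\dots,x_n\},\ |S|=m\}$. A partition $\lambda=(\lambda_1\ge\lambda_2\ge\cdots)$ of $n$ (with $\lambda_i=0$ beyond its length) has length $\ell(\lambda)$ and conjugate $\lambda'$ with $\lambda'_i=\#\{j:\lambda_j\ge i\}$. The Young diagram of $\lambda$ is drawn with rows counted from the bottom (bottom row of length $\lambda_1$), left-justified; columns are numbered $0,1,\dots,\lambda_1-1$ from left to right, column $c$ having height $\lambda'_{c+1}$. For $1\le m\le n$ put $\delta_m(\lambda)=\lambda'_n+\cdots+\lambda'_{n-m+1}$ (with $\lambda'_i=0$ for $i>\lambda_1$). The De Concini–Procesi ideal $\mathcal{I}_\lambda\subseteq R$ is the ideal generated by all elements of the sets $e_r(m)$ with $1\le m\le n$ and $m\ge r>m-\delta_m(\lambda)$. The regular filling of $\lambda$: for each column $c$, the bottom cell of column $c$ receives $n-c$, and the remaining $\lambda'_{c+1}-1$ cells of column $c$ receive, from top to bottom, the consecutive integers $1+\sum_{d<c}(\lambda'_{d+1}-1),\dots,\sum_{d\le c}(\lambda'_{d+1}-1)$. *)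

theory Defs
  imports Main "HOL-Library.Poly_Mapping"
begin

text \<open>Multivariate polynomials over a coefficient ring: finitely supported maps from
  monomials (finitely supported exponent vectors, variables indexed by nat) to coefficients.\<close>
type_synonym 'a mpoly = "(nat \<Rightarrow>\<^sub>0 nat) \<Rightarrow>\<^sub>0 'a"

definition Var :: "nat \<Rightarrow> 'a::comm_ring_1 mpoly" where
  "Var i = Poly_Mapping.single (Poly_Mapping.single i 1) 1"

definition in_R :: "nat \<Rightarrow> 'a::comm_ring_1 mpoly \<Rightarrow> bool" where
  "in_R n p \<longleftrightarrow> (\<forall>m \<in> Poly_Mapping.keys p. Poly_Mapping.keys m \<subseteq> {1..n})"

definition ideal_R :: "nat \<Rightarrow> 'a::comm_ring_1 mpoly set \<Rightarrow> 'a mpoly set" where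
  "ideal_R n G = {p. \<exists>S c. finite S \<and> S \<subseteq> G \<and> (\<forall>g\<in>S. in_R n (c g)) \<and> p = (\<Sum>g\<in>S. c g * g)}"

definition esym :: "nat \<Rightarrow> nat set \<Rightarrow> 'a::comm_ring_1 mpoly" where
  "esym r S = (\<Sum>T\<in>{T. T \<subseteq> S \<and> card T = r}. \<Prod>i\<in>T. Var i)"

text \<open>The set e_r(m) = { e_r(S) : S \<subseteq> {x_1..x_n}, |S| = m }.\<close>
definition esyms :: "nat \<Rightarrow> nat \<Rightarrow> nat \<Rightarrow> 'a::comm_ring_1 mpoly set" where
  "esyms n r m = {esym r S | S. S \<subseteq> {1..n} \<and> card S = m}"

definition is_partition :: "nat list \<Rightarrow> nat \<Rightarrow> bool" where
  "is_partition lam n \<longleftrightarrow> sorted_wrt (\<ge>) lam \<and> (\<forall>x\<in>set lam. 0 < x) \<and> sum_list lam = n"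

text \<open>lambda_i (1-indexed), 0 beyond the length.\<close>
definition part :: "nat list \<Rightarrow> nat \<Rightarrow> nat" where
  "part lam i = (if 1 \<le> i \<and> i \<le> length lam then lam ! (i - 1) else 0)"

definition conj :: "nat list \<Rightarrow> nat \<Rightarrow> nat" where
  "conj lam i = card {j. 1 \<le> j \<and> part lam j \<ge> i}"

definition delta :: "nat list \<Rightarrow> nat \<Rightarrow> nat \<Rightarrow> nat" where
  "delta lam n m = (\<Sum>i\<in>{n - m + 1..n}. conj lam i)"

definition DCP_ideal :: "nat list \<Rightarrow> nat \<Rightarrow> 'a::comm_ring_1 mpoly set" where
  "DCP_ideal lam n = ideal_R n (\<Union>m\<in>{1..n}. \<Union>r\<in>{r. r \<le> m \<and> m < r + delta lam n m}. esyms n r m)"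

definition bcol :: "nat list \<Rightarrow> nat \<Rightarrow> nat" where
  "bcol lam k = (\<Sum>i\<in>{1..k}. conj lam i) + 1 - k"

definition gens_col0 :: "nat list \<Rightarrow> nat \<Rightarrow> 'a::comm_ring_1 mpoly set" where
  "gens_col0 lam n = (\<Union>r\<in>{1..<length lam}. esyms n r n)"

text \<open>Generators from columns k = 1..t with t = lambda_2 - 1 (no such columns if lambda_2 \<le> 1).\<close>
definition gens_cols :: "nat list \<Rightarrow> nat \<Rightarrow> nat \<Rightarrow> 'a::comm_ring_1 mpoly set" where
  "gens_cols lam n k0 = (\<Union>k\<in>{k0..<part lam 2}. esyms n (bcol lam k) (n - k))"

text \<open>Last column, only when s = lambda_1 - 1 > t = lambda_2 - 1, i.e. lambda_1 > lambda_2.\<close>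
definition gens_last :: "nat list \<Rightarrow> nat \<Rightarrow> 'a::comm_ring_1 mpoly set" where
  "gens_last lam n = (if part lam 1 > part lam 2
     then esyms n (n - (part lam 1 - 1)) (n - (part lam 1 - 1)) else {})"

end

theory Submission
  imports Defs
begin


lemma in_R_0[simp]: "in_R n 0" by (simp add: in_R_def)
lemma in_R_single0: "in_R n (Poly_Mapping.single 0 c)" by (simp add: in_R_def)
lemma in_R_1[simp]: "in_R n (1::'a::comm_ring_1 mpoly)" by (simp add: in_R_def)
lemma in_R_add: "in_R n p \<Longrightarrow> in_R n q \<Longrightarrow> in_R n (p + q)"
  unfolding in_R_def using keys_add[of p q] by blast
lemma in_R_uminus: "in_R n p \<Longrightarrow> in_R n (- p)"
  unfolding in_R_def by simp
lemma in_R_diff: "in_R n p \<Longrightarrow> in_R n q \<Longrightarrow> in_R n (p - q)"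
  unfolding in_R_def using keys_diff[of p q] by blast
lemma in_R_mult: "in_R n p \<Longrightarrow> in_R n q \<Longrightarrow> in_R n (p * q)"
  unfolding in_R_def
proof
  fix m assume p: "\<forall>m\<in>Poly_Mapping.keys p. Poly_Mapping.keys m \<subseteq> {1..n}"
    and q: "\<forall>m\<in>Poly_Mapping.keys q. Poly_Mapping.keys m \<subseteq> {1..n}"
    and m: "m \<in> Poly_Mapping.keys (p * q)"
  then obtain a b where "m = a + b" "a \<in> Poly_Mapping.keys p" "b \<in> Poly_Mapping.keys q"
    using keys_mult by blast
  then show "Poly_Mapping.keys m \<subseteq> {1..n}" using p q keys_add[of a b] by blast
qed
lemma in_R_Var: "i \<in> {1..n} \<Longrightarrow> in_R n (Var i)"
  by (simp add: in_R_def Var_def)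
lemma in_R_power: "in_R n p \<Longrightarrow> in_R n (p ^ k)"
  by (induction k) (auto intro: in_R_mult)
lemma in_R_of_nat: "in_R n (of_nat k :: 'a::comm_ring_1 mpoly)"
  by (metis in_R_single0 single_of_nat)

lemma ideal_R_gen: "g \<in> G \<Longrightarrow> g \<in> ideal_R n G"
  unfolding ideal_R_def
  by (rule CollectI, rule exI[of _ "{g}"], rule exI[of _ "\<lambda>_. 1"]) simp

lemma ideal_R_0: "0 \<in> ideal_R n G"
  unfolding ideal_R_def by (rule CollectI, rule exI[of _ "{}"]) simp

lemma ideal_R_add:
  assumes "p \<in> ideal_R n G" "q \<in> ideal_R n G" shows "p + q \<in> ideal_R n G"
proof -
  obtain S1 c1 where 1: "finite S1" "S1 \<subseteq> G" "\<forall>g\<in>S1. in_R n (c1 g)" "p = (\<Sum>g\<in>S1. c1 g * g)"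
    using assms(1) unfolding ideal_R_def by blast
  obtain S2 c2 where 2: "finite S2" "S2 \<subseteq> G" "\<forall>g\<in>S2. in_R n (c2 g)" "q = (\<Sum>g\<in>S2. c2 g * g)"
    using assms(2) unfolding ideal_R_def by blast
  define c where "c g = (if g \<in> S1 then c1 g else 0) + (if g \<in> S2 then c2 g else 0)" for g
  have "(\<Sum>g\<in>S1 \<union> S2. c g * g) = (\<Sum>g\<in>S1 \<union> S2. if g \<in> S1 then c1 g * g else 0)
       + (\<Sum>g\<in>S1 \<union> S2. if g \<in> S2 then c2 g * g else 0)"
    unfolding c_def sum.distrib[symmetric] by (rule sum.cong) (auto simp: distrib_right)
  also have "\<dots> = p + q"
    using 1 2 by (simp add: sum.inter_restrict[symmetric] Int_absorb1 Int_absorb2)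
  finally have "p + q = (\<Sum>g\<in>S1 \<union> S2. c g * g)" by simp
  moreover have "\<forall>g\<in>S1 \<union> S2. in_R n (c g)" using 1 2 unfolding c_def by (auto intro: in_R_add)
  ultimately show ?thesis using 1 2 unfolding ideal_R_def
    by (intro CollectI exI[of _ "S1 \<union> S2"] exI[of _ c]) auto
qed

lemma ideal_R_mult:
  assumes "in_R n a" "p \<in> ideal_R n G" shows "a * p \<in> ideal_R n G"
proof -
  obtain S c where 1: "finite S" "S \<subseteq> G" "\<forall>g\<in>S. in_R n (c g)" "p = (\<Sum>g\<in>S. c g * g)"
    using assms(2) unfolding ideal_R_def by blast
  have "a * p = (\<Sum>g\<in>S. (a * c g) * g)" using 1 by (simp add: sum_distrib_left mult.assoc)
  moreover have "\<forall>g\<in>S. in_R n (a * c g)" using 1 assms(1) by (auto intro: in_R_mult)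
  ultimately show ?thesis using 1 unfolding ideal_R_def
    by (intro CollectI exI[of _ "S"] exI[of _ "\<lambda>g. a * c g"]) auto
qed

lemma ideal_R_uminus: assumes "p \<in> ideal_R n G" shows "- p \<in> ideal_R n (G :: 'a::comm_ring_1 mpoly set)"
proof -
  have "(-1) * p \<in> ideal_R n G" by (rule ideal_R_mult) (auto intro: in_R_uminus assms)
  then show ?thesis by simp
qed

lemma ideal_R_diff: "p \<in> ideal_R n G \<Longrightarrow> q \<in> ideal_R n G \<Longrightarrow> p - q \<in> ideal_R n (G :: 'a::comm_ring_1 mpoly set)"
  using ideal_R_add[of p n G "-q"] ideal_R_uminus by fastforce

lemma ideal_R_sum: "finite A \<Longrightarrow> (\<And>x. x \<in> A \<Longrightarrow> f x \<in> ideal_R n G) \<Longrightarrow> sum f A \<in> ideal_R n G"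
  by (induction A rule: finite_induct) (auto intro: ideal_R_0 ideal_R_add)

lemma ideal_R_mono: assumes "G \<subseteq> ideal_R n H" shows "ideal_R n G \<subseteq> ideal_R n H"
proof
  fix p assume "p \<in> ideal_R n G"
  then obtain S c where 1: "finite S" "S \<subseteq> G" "\<forall>g\<in>S. in_R n (c g)" "p = (\<Sum>g\<in>S. c g * g)"
    unfolding ideal_R_def by blast
  show "p \<in> ideal_R n H" unfolding 1(4)
    by (rule ideal_R_sum[OF 1(1)]) (use 1 assms in \<open>auto intro: ideal_R_mult\<close>)
qed

lemma ideal_R_eqI: "G \<subseteq> ideal_R n H \<Longrightarrow> H \<subseteq> ideal_R n G \<Longrightarrow> ideal_R n G = ideal_R n H"
  using ideal_R_mono by blast

lemma ideal_R_div:
  assumes "of_nat k * p \<in> ideal_R n G" "k > 0"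
  shows "p \<in> ideal_R n (G :: 'a::field_char_0 mpoly set)"
proof -
  have k: "(of_nat k :: 'a mpoly) = Poly_Mapping.single 0 (of_nat k)" by simp
  have one: "(1 :: 'a mpoly) = Poly_Mapping.single 0 1"
    using single_of_nat[of 1, where 'b='a] by simp
  have "Poly_Mapping.single 0 (inverse (of_nat k)) * (of_nat k :: 'a mpoly)
      = Poly_Mapping.single 0 (inverse (of_nat k) * of_nat k)"
    by (simp only: k mult_single add_0)
  also have "\<dots> = 1" using assms(2) one by simp
  finally have inv: "Poly_Mapping.single 0 (inverse (of_nat k)) * (of_nat k :: 'a mpoly) = 1" .
  have "p = Poly_Mapping.single 0 (inverse (of_nat k)) * (of_nat k * p)"
    by (simp add: mult.assoc[symmetric] inv)
  moreover have "Poly_Mapping.single 0 (inverse (of_nat k)) * (of_nat k * p) \<in> ideal_R n G"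
    by (rule ideal_R_mult[OF in_R_single0 assms(1)])
  ultimately show ?thesis by metis
qed



lemma esym_sets_finite: "finite S \<Longrightarrow> finite {T. T \<subseteq> S \<and> card T = r}"
  by (rule finite_subset[of _ "Pow S"]) auto

lemma esym_0[simp]: "finite S \<Longrightarrow> esym 0 S = 1"
proof -
  assume f: "finite S"
  have "T = {}" if "T \<subseteq> S" "card T = 0" for T
  proof -
    have "finite T" using finite_subset[OF that(1) f] .
    then show ?thesis using that(2) card_0_eq by blast
  qed
  then have "{T. T \<subseteq> S \<and> card T = 0} = {{}}" by auto
  then show ?thesis by (simp add: esym_def)
qed

lemma esym_big: "finite S \<Longrightarrow> card S < r \<Longrightarrow> esym r S = 0"
proof -
  assume f: "finite S" and c: "card S < r"
  have "card T \<noteq> r" if "T \<subseteq> S" for T using c card_mono[OF f that] by linarith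
  then have E: "{T. T \<subseteq> S \<and> card T = r} = {}" by auto
  show ?thesis unfolding esym_def E by simp
qed

lemma esym_insert:
  assumes f: "finite S" and a: "a \<notin> S"
  shows "esym (Suc r) (insert a S) = esym (Suc r) S + Var a * (esym r S :: 'a::comm_ring_1 mpoly)"
proof -
  let ?A = "{T. T \<subseteq> insert a S \<and> card T = Suc r}"
  let ?B = "{T. T \<subseteq> S \<and> card T = Suc r}"
  let ?C = "{T. T \<subseteq> S \<and> card T = r}"
  have fB: "finite ?B" and fC: "finite ?C" using esym_sets_finite[OF f] by auto
  have A: "?A = ?B \<union> insert a ` ?C"
  proof
    show "?A \<subseteq> ?B \<union> insert a ` ?C"
    proof
      fix T assume T: "T \<in> ?A"
      have fT: "finite T" using T f by (auto intro: finite_subset)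
      show "T \<in> ?B \<union> insert a ` ?C"
      proof (cases "a \<in> T")
        case True
        then have "T = insert a (T - {a})" by auto
        moreover have "T - {a} \<in> ?C" using T True fT by auto
        ultimately show ?thesis by blast
      next
        case False then show ?thesis using T by auto
      qed
    qed
  next
    show "?B \<union> insert a ` ?C \<subseteq> ?A"
    proof
      fix T assume "T \<in> ?B \<union> insert a ` ?C"
      then show "T \<in> ?A"
      proof
        assume "T \<in> ?B" then show ?thesis by auto
      next
        assume "T \<in> insert a ` ?C"
        then obtain U where U: "U \<in> ?C" "T = insert a U" by blast
        have "finite U" using U f by (auto intro: finite_subset)
        moreover have "a \<notin> U" using U a by auto
        ultimately show ?thesis using U by auto
      qed
    qed
  qed
  have disj: "?B \<inter> insert a ` ?C = {}" using a by auto
  have inj: "inj_on (insert a) ?C"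
  proof (rule inj_onI)
    fix x y assume "x \<in> ?C" "y \<in> ?C" "insert a x = insert a y"
    moreover have "a \<notin> x" "a \<notin> y" using calculation a by auto
    ultimately show "x = y" by (metis Diff_insert_absorb)
  qed
  have "esym (Suc r) (insert a S) = (\<Sum>T\<in>?B. \<Prod>i\<in>T. Var i) + (\<Sum>T\<in>insert a ` ?C. \<Prod>i\<in>T. Var i)"
    unfolding esym_def A by (rule sum.union_disjoint) (use fB fC disj in auto)
  also have "(\<Sum>T\<in>insert a ` ?C. \<Prod>i\<in>T. Var i) = (\<Sum>U\<in>?C. \<Prod>i\<in>insert a U. Var i)"
    by (rule sum.reindex[OF inj, unfolded comp_def])
  also have "\<dots> = (\<Sum>U\<in>?C. Var a * (\<Prod>i\<in>U. Var i))"
    by (intro sum.cong refl, subst prod.insert) (use f a in \<open>auto intro: finite_subset\<close>)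
  also have "\<dots> = Var a * esym r S" by (simp add: esym_def sum_distrib_left)
  finally show ?thesis by (simp add: esym_def)
qed

lemma esym_remove:
  assumes "finite S" "x \<in> S"
  shows "esym (Suc r) S = esym (Suc r) (S - {x}) + Var x * (esym r (S - {x}) :: 'a::comm_ring_1 mpoly)"
proof -
  have "S = insert x (S - {x})" using assms by auto
  then have "esym (Suc r) S = esym (Suc r) (insert x (S - {x}))" by simp
  also have "\<dots> = esym (Suc r) (S - {x}) + Var x * esym r (S - {x})"
    by (rule esym_insert) (use assms in auto)
  finally show ?thesis .
qed

lemma esym_E3:
  "finite S \<Longrightarrow> (\<Sum>x\<in>S. Var x * esym r (S - {x})) = of_nat (Suc r) * (esym (Suc r) S :: 'a::comm_ring_1 mpoly)"
proof (induction S arbitrary: r rule: finite_induct)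
  case empty
  then show ?case by (simp add: esym_big)
next
  case (insert a S)
  have eq: "insert a S - {x} = insert a (S - {x})" if "x \<in> S" for x using that insert by auto
  have "(\<Sum>x\<in>insert a S. Var x * esym r (insert a S - {x}))
      = Var a * esym r S + (\<Sum>x\<in>S. Var x * esym r (insert a (S - {x})))"
    using insert by (simp add: eq)
  also have "\<dots> = of_nat (Suc r) * (esym (Suc r) (insert a S) :: 'a mpoly)"
  proof (cases r)
    case 0
    have "(\<Sum>x\<in>S. Var x * esym r (insert a (S - {x}))) = (\<Sum>x\<in>S. Var x * (esym 0 (S - {x}) :: 'a mpoly))"
      using insert 0 by simp
    also have "\<dots> = esym 1 S" using insert.IH[of 0] by simp
    finally have s: "(\<Sum>x\<in>S. Var x * esym r (insert a (S - {x}))) = (esym 1 S :: 'a mpoly)" .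
    have e: "esym (Suc 0) (insert a S) = esym (Suc 0) S + (Var a :: 'a mpoly)"
      using esym_insert[OF insert(1,2), of 0, where 'a='a] insert(1) by simp
    show ?thesis unfolding s using e 0 insert(1) by simp
  next
    case (Suc r')
    have "(\<Sum>x\<in>S. Var x * esym r (insert a (S - {x})))
        = (\<Sum>x\<in>S. Var x * esym (Suc r') (S - {x}) + Var a * (Var x * (esym r' (S - {x}) :: 'a mpoly)))"
      using insert Suc by (intro sum.cong) (auto simp: esym_insert algebra_simps)
    also have "\<dots> = of_nat (Suc (Suc r')) * esym (Suc (Suc r')) S + Var a * (of_nat (Suc r') * esym (Suc r') S)"
      by (simp add: sum.distrib sum_distrib_left[symmetric] insert.IH)
    finally have s: "(\<Sum>x\<in>S. Var x * esym r (insert a (S - {x}))) = 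
      of_nat (Suc (Suc r')) * esym (Suc (Suc r')) S + Var a * (of_nat (Suc r') * (esym (Suc r') S :: 'a mpoly))" .
    show ?thesis by (simp only: s) (simp add: Suc esym_insert[OF insert(1,2)] algebra_simps)
  qed
  finally show ?case .
qed

lemma esym_E2:
  assumes "finite S"
  shows "(\<Sum>x\<in>S. esym r (S - {x})) + of_nat r * esym r S = of_nat (card S) * (esym r S :: 'a::comm_ring_1 mpoly)"
proof (cases r)
  case 0 then show ?thesis using assms by simp
next
  case (Suc r')
  have "of_nat (card S) * (esym r S :: 'a mpoly) = (\<Sum>x\<in>S. esym r S)" by simp
  also have "\<dots> = (\<Sum>x\<in>S. esym r (S - {x}) + Var x * esym r' (S - {x}))"
    using assms Suc by (intro sum.cong) (auto simp: esym_remove[of S _ r'])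
  also have "\<dots> = (\<Sum>x\<in>S. esym r (S - {x})) + of_nat r * esym r S"
    using esym_E3[OF assms, of r'] Suc by (simp add: sum.distrib)
  finally show ?thesis by simp
qed



lemma esyms_mem: "S \<subseteq> {1..n} \<Longrightarrow> card S = m \<Longrightarrow> esym r S \<in> esyms n r m"
  unfolding esyms_def by blast

lemma esyms_elim: "p \<in> esyms n r m \<Longrightarrow> (\<And>S. p = esym r S \<Longrightarrow> S \<subseteq> {1..n} \<Longrightarrow> card S = m \<Longrightarrow> finite S \<Longrightarrow> P) \<Longrightarrow> P"
  unfolding esyms_def by (auto intro: finite_subset)

lemma swap_identity:
  assumes f: "finite S" and y: "y \<in> S" and z: "z \<notin> S"
  shows "Var z * esym r S - Var y * esym r (insert z (S - {y}))
       = (Var z - Var y) * (esym r (S - {y}) :: 'a::comm_ring_1 mpoly)"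
proof (cases r)
  case 0 then show ?thesis using f by (simp add: algebra_simps)
next
  case (Suc r')
  have 1: "esym r S = esym r (S - {y}) + Var y * (esym r' (S - {y}) :: 'a mpoly)"
    using esym_remove[OF f y] Suc by simp
  have 2: "esym r (insert z (S - {y})) = esym r (S - {y}) + Var z * (esym r' (S - {y}) :: 'a mpoly)"
    using esym_insert[of "S - {y}" z r'] f z Suc by simp
  show ?thesis unfolding 1 2 by (simp add: algebra_simps)
qed

lemma up_r:
  assumes I: "esyms n r m \<subseteq> ideal_R n G" and mn: "m < n"
  shows "esyms n (Suc r) m \<subseteq> ideal_R n (G :: 'a::field_char_0 mpoly set)"
proof
  fix p :: "'a mpoly" assume "p \<in> esyms n (Suc r) m"
  then obtain S where S: "p = esym (Suc r) S" "S \<subseteq> {1..n}" "card S = m" "finite S"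
    by (rule esyms_elim)
  obtain z where z: "z \<in> {1..n}" "z \<notin> S"
  proof -
    have "\<not> {1..n} \<subseteq> S"
    proof
      assume "{1..n} \<subseteq> S"
      then have "card {1..n} \<le> card S" by (rule card_mono[OF S(4)])
      with S(3) mn show False by simp
    qed
    then show ?thesis using that by blast
  qed
  have key: "(Var z - Var y) * esym r (S - {y}) \<in> ideal_R n G" if y: "y \<in> S" for y
  proof -
    have sub: "insert z (S - {y}) \<subseteq> {1..n}" using S z by auto
    have "card (insert z (S - {y})) = m"
      using S y z by (simp add: card_insert_disjoint) (metis One_nat_def Suc_pred card_gt_0_iff empty_iff)
    then have a: "esym r (insert z (S - {y})) \<in> ideal_R n G" using I esyms_mem[OF sub] by blast
    have b: "esym r S \<in> ideal_R n G" using I esyms_mem[OF S(2,3)] by blast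
    have "Var z * esym r S - Var y * esym r (insert z (S - {y})) \<in> ideal_R n G"
      using y S z(1) by (intro ideal_R_diff ideal_R_mult a b in_R_Var) auto
    then show ?thesis using swap_identity[OF S(4) y z(2), of r, where 'a='a] by metis
  qed
  have E2: "(\<Sum>y\<in>S. esym r (S - {y})) = of_nat m * esym r S - of_nat r * (esym r S :: 'a mpoly)"
    using esym_E2[OF S(4), of r] S(3) by (simp add: algebra_simps)
  have "(\<Sum>y\<in>S. esym r (S - {y})) \<in> ideal_R n G"
    unfolding E2 using I esyms_mem[OF S(2,3)]
    by (intro ideal_R_diff ideal_R_mult in_R_of_nat) auto
  then have t2: "Var z * (\<Sum>y\<in>S. esym r (S - {y})) \<in> ideal_R n G"
    using z by (intro ideal_R_mult in_R_Var) auto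
  have t1: "(\<Sum>y\<in>S. (Var z - Var y) * esym r (S - {y})) \<in> ideal_R n G"
    using key S(4) by (intro ideal_R_sum) auto
  have "of_nat (Suc r) * esym (Suc r) S = (\<Sum>y\<in>S. Var y * (esym r (S - {y}) :: 'a mpoly))"
    using esym_E3[OF S(4), of r, where 'a='a] by metis
  also have "\<dots> = Var z * (\<Sum>y\<in>S. esym r (S - {y})) - (\<Sum>y\<in>S. (Var z - Var y) * esym r (S - {y}))"
    by (simp add: sum_distrib_left sum_subtractf[symmetric] algebra_simps)
  finally have "of_nat (Suc r) * esym (Suc r) S \<in> ideal_R n G"
    using ideal_R_diff[OF t2 t1] by simp
  then show "p \<in> ideal_R n G" unfolding S(1) by (rule ideal_R_div) simp
qed

lemma up_m:
  assumes I: "\<forall>r'\<ge>r. esyms n r' m \<subseteq> ideal_R n G" and rm: "r \<le> m" and mn: "Suc m \<le> n"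
  shows "\<forall>r'\<ge>r. esyms n r' (Suc m) \<subseteq> ideal_R n (G :: 'a::field_char_0 mpoly set)"
proof (intro allI impI subsetI)
  fix r' and p :: "'a mpoly" assume r': "r \<le> r'" and "p \<in> esyms n r' (Suc m)"
  then obtain S where S: "p = esym r' S" "S \<subseteq> {1..n}" "card S = Suc m" "finite S"
    by (elim esyms_elim)
  have cm: "card (S - {x}) = m" if "x \<in> S" for x using S that by simp
  have sub: "S - {x} \<subseteq> {1..n}" for x using S by auto
  have mem: "esym r'' (S - {x}) \<in> ideal_R n G" if "x \<in> S" "r \<le> r''" for x r''
    using I that esyms_mem[OF sub cm[OF that(1)]] by blast
  obtain x where x: "x \<in> S" using S(3) by (metis card.empty ex_in_conv nat.distinct(1))
  show "p \<in> ideal_R n G"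
  proof (cases "r' = r")
    case True
    have "(\<Sum>y\<in>S. esym r (S - {y})) = of_nat (Suc m) * esym r S - of_nat r * (esym r S :: 'a mpoly)"
      using esym_E2[OF S(4), of r] S(3) by (simp add: algebra_simps)
    also have "\<dots> = of_nat (Suc m - r) * esym r S" using rm by (simp add: of_nat_diff algebra_simps)
    finally have "of_nat (Suc m - r) * esym r S \<in> ideal_R n G"
      by (metis (no_types, lifting) ideal_R_sum S(4) mem order_refl)
    then show ?thesis unfolding S(1) True by (rule ideal_R_div) (use rm in simp)
  next
    case False
    then obtain r'' where r'': "r' = Suc r''" "r \<le> r''" using r' by (cases r') auto
    have "p = esym r' (S - {x}) + Var x * esym r'' (S - {x})"
      unfolding S(1) r''(1) by (rule esym_remove[OF S(4) x])
    also have "\<dots> \<in> ideal_R n G"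
      using x S r'' mem by (intro ideal_R_add ideal_R_mult in_R_Var) auto
    finally show ?thesis .
  qed
qed

lemma UC:
  assumes I: "esyms n r m \<subseteq> ideal_R n G" and "r \<le> m" "m < n" "m \<le> m'" "m' \<le> n" "r \<le> r'"
  shows "esyms n r' m' \<subseteq> ideal_R n (G :: 'a::field_char_0 mpoly set)"
proof -
  have A: "esyms n r'' m \<subseteq> ideal_R n G" if "r \<le> r''" for r''
    using that
  proof (induction r'' rule: dec_induct)
    case base then show ?case using I .
  next
    case (step k) then show ?case using up_r[OF step.IH assms(3)] by simp
  qed
  have "\<forall>r''\<ge>r. esyms n r'' m' \<subseteq> ideal_R n G"
    using assms(4,5)
  proof (induction m' rule: dec_induct)
    case base then show ?case using A by auto
  next
    case (step k)
    show ?case by (rule up_m) (use step assms(2) in auto)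
  qed
  then show ?thesis using assms(6) by auto
qed



lemma sum_shift1: "(\<Sum>j\<in>{1..k}. g j) = (\<Sum>j<k. (g (Suc j) :: 'b::comm_monoid_add))"
  by (induction k) (auto simp: atLeastAtMostSuc_conv add.commute)

lemma sum_split_at: "k \<le> n \<Longrightarrow> (\<Sum>i\<in>{1..n}. f i) = (\<Sum>i\<in>{1..k}. f i) + (\<Sum>i\<in>{Suc k..n}. (f i :: nat))"
proof -
  assume k: "k \<le> n"
  have "{1..n} = {1..k} \<union> {Suc k..n}" using k by auto
  then show ?thesis by (simp add: sum.union_disjoint[symmetric] ivl_disj_int_two)
qed

lemma card_filter_sum: "finite A \<Longrightarrow> card {x\<in>A. P x} = (\<Sum>x\<in>A. if P x then 1 else 0)"
  by (simp add: sum.If_cases Int_def)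

context
  fixes lam :: "nat list" and n :: nat
  assumes P: "is_partition lam n"
begin

lemma part_mono: "1 \<le> j \<Longrightarrow> j \<le> j' \<Longrightarrow> part lam j' \<le> part lam j"
proof -
  assume j: "1 \<le> j" "j \<le> j'"
  show ?thesis
  proof (cases "j' \<le> length lam")
    case False then show ?thesis by (simp add: part_def)
  next
    case True
    show ?thesis
    proof (cases "j = j'")
      case False
      have "sorted_wrt (\<ge>) lam" using P by (simp add: is_partition_def)
      then have "lam ! (j - 1) \<ge> lam ! (j' - 1)"
        using sorted_wrt_nth_less[of "(\<ge>)" lam "j - 1" "j' - 1"] j True False by simp
      then show ?thesis using j True by (simp add: part_def)
    qed simp
  qed
qed

lemma part_pos: "1 \<le> j \<Longrightarrow> j \<le> length lam \<Longrightarrow> 1 \<le> part lam j"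
proof -
  assume j: "1 \<le> j" "j \<le> length lam"
  have "lam ! (j - 1) \<in> set lam" by (rule nth_mem) (use j in simp)
  then have "0 < lam ! (j - 1)" using P by (auto simp: is_partition_def)
  then show ?thesis using j by (simp add: part_def)
qed

lemma part_zero: "part lam j \<noteq> 0 \<Longrightarrow> 1 \<le> j \<and> j \<le> length lam"
  by (auto simp: part_def split: if_splits)

lemma sum_part: "(\<Sum>j\<in>{1..length lam}. part lam j) = n"
proof -
  have "(\<Sum>j\<in>{1..length lam}. part lam j) = (\<Sum>j<length lam. lam ! j)"
    unfolding sum_shift1 by (intro sum.cong refl) (simp add: part_def)
  also have "\<dots> = sum_list lam" by (simp add: sum_list_sum_nth atLeast0LessThan)
  finally show ?thesis using P by (simp add: is_partition_def)
qed

lemma part_le_n: "part lam j \<le> n"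
proof (cases "part lam j = 0")
  case False
  then have "j \<in> {1..length lam}" using part_zero by auto
  then have "part lam j \<le> (\<Sum>j\<in>{1..length lam}. part lam j)" by (intro member_le_sum) auto
  then show ?thesis using sum_part by simp
qed simp

lemma conj_eq: "1 \<le> i \<Longrightarrow> conj lam i = card {j\<in>{1..length lam}. i \<le> part lam j}"
proof -
  assume i: "1 \<le> i"
  have "{j. 1 \<le> j \<and> i \<le> part lam j} = {j\<in>{1..length lam}. i \<le> part lam j}"
    using i part_zero by fastforce
  then show ?thesis by (simp add: conj_def)
qed

lemma conj_sum: "(\<Sum>i\<in>{1..n}. conj lam i) = n"
proof -
  let ?J = "{1..length lam}"
  have "(\<Sum>i\<in>{1..n}. conj lam i) = (\<Sum>i\<in>{1..n}. \<Sum>j\<in>?J. if i \<le> part lam j then 1 else 0)"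
    by (intro sum.cong refl) (subst conj_eq, simp, rule card_filter_sum, simp)
  also have "\<dots> = (\<Sum>j\<in>?J. \<Sum>i\<in>{1..n}. if i \<le> part lam j then 1 else 0)"
    by (rule sum.swap)
  also have "\<dots> = (\<Sum>j\<in>?J. part lam j)"
  proof (intro sum.cong refl)
    fix j
    have "{1..n} \<inter> {i. i \<le> part lam j} = {1..part lam j}" using part_le_n[of j] by auto
    then show "(\<Sum>i\<in>{1..n}. if i \<le> part lam j then 1 else 0) = part lam j"
      by (simp add: sum.If_cases)
  qed
  also have "\<dots> = n" by (rule sum_part)
  finally show ?thesis .
qed

lemma conj_1: "conj lam 1 = length lam"
proof -
  have "{j\<in>{1..length lam}. 1 \<le> part lam j} = {1..length lam}" using part_pos by auto
  then show ?thesis by (simp add: conj_eq)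
qed

lemma conj_zero: "part lam 1 < i \<Longrightarrow> conj lam i = 0"
proof -
  assume i: "part lam 1 < i"
  have "{j\<in>{1..length lam}. i \<le> part lam j} = {}"
    using i part_mono[of 1] by fastforce
  then show ?thesis using i by (simp add: conj_eq)
qed

lemma conj_le1: "part lam 2 < i \<Longrightarrow> conj lam i \<le> 1"
proof -
  assume i: "part lam 2 < i"
  have "{j\<in>{1..length lam}. i \<le> part lam j} \<subseteq> {1}"
  proof
    fix j assume j: "j \<in> {j\<in>{1..length lam}. i \<le> part lam j}"
    show "j \<in> {1}"
    proof (rule ccontr)
      assume "j \<notin> {1}" then have "2 \<le> j" using j by auto
      then have "part lam j \<le> part lam 2" by (intro part_mono) auto
      then show False using i j by auto
    qed
  qed
  then have "card {j\<in>{1..length lam}. i \<le> part lam j} \<le> card {1::nat}"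
    by (rule card_mono[rotated]) simp
  then show ?thesis using i by (simp add: conj_eq)
qed

lemma conj_pos: "1 \<le> i \<Longrightarrow> i \<le> part lam 1 \<Longrightarrow> 1 \<le> conj lam i"
proof -
  assume i: "1 \<le> i" "i \<le> part lam 1"
  then have "1 \<le> length lam" using part_zero[of 1] by auto
  then have "1 \<in> {j\<in>{1..length lam}. i \<le> part lam j}" using i by auto
  then have "0 < card {j\<in>{1..length lam}. i \<le> part lam j}" by (subst card_gt_0_iff) auto
  then show ?thesis using i by (simp add: conj_eq)
qed

end


context
  fixes lam :: "nat list" and n :: nat
  assumes P: "is_partition lam n"
begin

lemma delta_eq: "m \<le> n \<Longrightarrow> delta lam n m = (\<Sum>i\<in>{Suc (n - m)..n}. conj lam i)"
  by (simp add: delta_def)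

lemma tail_eq: "k \<le> n \<Longrightarrow> (\<Sum>i\<in>{1..k}. conj lam i) + (\<Sum>i\<in>{Suc k..n}. conj lam i) = n"
  using sum_split_at[of k n "conj lam"] conj_sum[OF P] by simp

lemma tail_small:
  assumes "part lam 2 \<le> k" "k \<le> part lam 1"
  shows "(\<Sum>i\<in>{Suc k..n}. conj lam i) \<le> part lam 1 - k"
proof -
  have "(\<Sum>i\<in>{Suc k..n}. conj lam i) \<le> (\<Sum>i\<in>{Suc k..n}. if i \<le> part lam 1 then 1 else 0)"
  proof (rule sum_mono)
    fix i assume i: "i \<in> {Suc k..n}"
    show "conj lam i \<le> (if i \<le> part lam 1 then 1 else 0)"
      using conj_le1[OF P, of i] conj_zero[OF P, of i] i assms by auto
  qed
  also have "\<dots> = card {i\<in>{Suc k..n}. i \<le> part lam 1}" by (rule card_filter_sum[symmetric]) simp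
  also have "{i\<in>{Suc k..n}. i \<le> part lam 1} = {Suc k..part lam 1}"
    using part_le_n[OF P, of 1] by auto
  finally show ?thesis by simp
qed

lemma tail_pos: "k < part lam 1 \<Longrightarrow> 1 \<le> (\<Sum>i\<in>{Suc k..n}. conj lam i)"
proof -
  assume k: "k < part lam 1"
  have "Suc k \<in> {Suc k..n}" using k part_le_n[OF P, of 1] by auto
  then have "conj lam (Suc k) \<le> (\<Sum>i\<in>{Suc k..n}. conj lam i)" by (intro member_le_sum) auto
  moreover have "1 \<le> conj lam (Suc k)" using conj_pos[OF P, of "Suc k"] k by auto
  ultimately show ?thesis by linarith
qed

lemma head_ge: "k \<le> part lam 1 \<Longrightarrow> k \<le> (\<Sum>i\<in>{1..k}. conj lam i)"
proof -
  assume k: "k \<le> part lam 1"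
  have "(\<Sum>i\<in>{1..k}. (1::nat)) \<le> (\<Sum>i\<in>{1..k}. conj lam i)"
    by (rule sum_mono) (use conj_pos[OF P] k in auto)
  then show ?thesis by simp
qed

lemma bcol_eq: "bcol lam k = (\<Sum>i\<in>{1..k}. conj lam i) + 1 - k"
  by (simp add: bcol_def)

lemma memDCPG:
  "m \<in> {1..n} \<Longrightarrow> r \<le> m \<Longrightarrow> m < r + delta lam n m \<Longrightarrow>
   esyms n r m \<subseteq> (\<Union>m\<in>{1..n}. \<Union>r\<in>{r. r \<le> m \<and> m < r + delta lam n m}. esyms n r m)"
  by blast

lemma claim1:
  assumes n1: "1 \<le> n" and p1: "part lam 1 \<ge> 2"
  shows "(DCP_ideal lam n :: 'a::field_char_0 mpoly set)
       = ideal_R n (gens_col0 lam n \<union> gens_cols lam n 1 \<union> gens_last lam n)"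
proof -
  let ?G = "gens_col0 lam n \<union> gens_cols lam n 1 \<union> gens_last lam n :: 'a mpoly set"
  let ?J = "ideal_R n ?G"
  let ?D = "(\<Union>m\<in>{1..n}. \<Union>r\<in>{r. r \<le> m \<and> m < r + delta lam n m}. esyms n r m) :: 'a mpoly set"
  define p1 where "p1 = part lam 1"
  define p2 where "p2 = part lam 2"
  have p1n: "p1 \<le> n" unfolding p1_def by (rule part_le_n[OF P])
  have p21: "p2 \<le> p1" unfolding p1_def p2_def by (rule part_mono[OF P]) auto
  have p12: "2 \<le> p1" using p1 p1_def by simp
  note tl = tail_eq
  have LEV: "esyms n r (n - k) \<subseteq> ?J"
    if k1: "1 \<le> k" and kp: "k < p1" and cr: "(\<Sum>i\<in>{1..k}. conj lam i) < r + k" for k r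
  proof -
    have kn: "k \<le> n" using kp p1n by simp
    have tk: "(\<Sum>i\<in>{1..k}. conj lam i) + (\<Sum>i\<in>{Suc k..n}. conj lam i) = n" using tl[OF kn] .
    show ?thesis
    proof (cases "k < p2")
      case True
      have g: "esyms n (bcol lam k) (n - k) \<subseteq> ?J"
        using True k1 unfolding p2_def by (intro subsetI ideal_R_gen) (auto simp: gens_cols_def)
      have tp: "1 \<le> (\<Sum>i\<in>{Suc k..n}. conj lam i)" using tail_pos kp p1_def by simp
      show ?thesis
        by (rule UC[OF g]) (use tp tk cr k1 kn kp p1n in \<open>auto simp: bcol_eq\<close>)
    next
      case False
      then have lastex: "p2 < p1" using kp by simp
      have g: "esyms n (n - (p1 - 1)) (n - (p1 - 1)) \<subseteq> ?J"
        using lastex unfolding p2_def p1_def by (intro subsetI ideal_R_gen) (auto simp: gens_last_def)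
      have ts: "(\<Sum>i\<in>{Suc k..n}. conj lam i) \<le> p1 - k"
        using tail_small[of k] False kp unfolding p1_def p2_def by simp
      show ?thesis
        by (rule UC[OF g]) (use ts tk cr k1 kn kp p1n p12 in auto)
    qed
  qed
  have t0: "(\<Sum>i\<in>{Suc 0..n}. conj lam i) = n" using conj_sum[OF P] by simp
  have c1: "(\<Sum>i\<in>{1..1}. conj lam i) = length lam" using conj_1[OF P] by simp
  have l_lt: "length lam < n"
    using tl[of 1] tail_pos[of 1] c1 n1 p12 p1n unfolding p1_def by simp
  have D_J: "?D \<subseteq> ?J"
  proof
    fix g :: "'a mpoly" assume "g \<in> ?D"
    then obtain m r where mr: "m \<in> {1..n}" "r \<le> m" "m < r + delta lam n m" "g \<in> esyms n r m"
      by blast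
    define k where "k = n - m"
    have mk: "m = n - k" "k \<le> n" using mr(1) k_def by auto
    have dl: "delta lam n m = (\<Sum>i\<in>{Suc k..n}. conj lam i)" using delta_eq[of m] mr(1) k_def by simp
    consider "k = 0" | "1 \<le> k" "k < p1" | "p1 \<le> k" by linarith
    then show "g \<in> ?J"
    proof cases
      case 1
      then have r1: "1 \<le> r" and mn: "m = n" using mr dl t0 mk by auto
      show ?thesis
      proof (cases "r < length lam")
        case True
        then have "g \<in> gens_col0 lam n" using mr(4) r1 mn by (auto simp: gens_col0_def)
        then show ?thesis by (intro ideal_R_gen) auto
      next
        case False
        have "esyms n (length lam) (n - 1) \<subseteq> ?J" by (rule LEV) (use c1 p12 in auto)
        then have "esyms n r n \<subseteq> ?J" by (rule UC) (use False l_lt in auto)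
        then show ?thesis using mr(4) mn by auto
      qed
    next
      case 2
      have "(\<Sum>i\<in>{1..k}. conj lam i) < r + k" using mr(3) dl tl[OF mk(2)] mk(1) by linarith
      then have "esyms n r (n - k) \<subseteq> ?J" by (rule LEV[OF 2])
      then show ?thesis using mr(4) mk by auto
    next
      case 3
      have "(\<Sum>i\<in>{Suc k..n}. conj lam i) = 0"
        using 3 conj_zero[OF P] unfolding p1_def by (intro sum.neutral) auto
      then show ?thesis using mr dl by simp
    qed
  qed
  have J_D: "?G \<subseteq> ?D"
  proof (intro Un_least)
    show "gens_col0 lam n \<subseteq> ?D"
      unfolding gens_col0_def
      by (intro UN_least memDCPG) (use l_lt n1 t0 in \<open>auto simp: delta_eq\<close>)
    show "gens_cols lam n 1 \<subseteq> ?D"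
      unfolding gens_cols_def
    proof (intro UN_least memDCPG)
      fix k assume k: "k \<in> {1..<part lam 2}"
      then have k1: "1 \<le> k" and kp: "k < p1" using p21 unfolding p2_def by auto
      have kn: "k \<le> n" using kp p1n by simp
      have tk: "(\<Sum>i\<in>{1..k}. conj lam i) + (\<Sum>i\<in>{Suc k..n}. conj lam i) = n" using tl[OF kn] .
      have tp: "1 \<le> (\<Sum>i\<in>{Suc k..n}. conj lam i)" using tail_pos kp p1_def by simp
      have hg: "k \<le> (\<Sum>i\<in>{1..k}. conj lam i)" using head_ge[of k] kp p1_def by simp
      have dl: "delta lam n (n - k) = (\<Sum>i\<in>{Suc k..n}. conj lam i)" using delta_eq[of "n - k"] kn by simp
      show "n - k \<in> {1..n}" using kn kp p1n by auto
      show "bcol lam k \<le> n - k" using tk tp k1 unfolding bcol_eq by linarith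
      show "n - k < bcol lam k + delta lam n (n - k)" unfolding dl bcol_eq using tk hg k1 kn kp p1n by linarith
    qed
    show "gens_last lam n \<subseteq> ?D"
    proof (cases "part lam 2 < part lam 1")
      case True
      have kn: "p1 - 1 \<le> n" using p1n by simp
      have tp: "1 \<le> (\<Sum>i\<in>{Suc (p1 - 1)..n}. conj lam i)" using tail_pos[of "p1 - 1"] p12 p1_def by simp
      have dl: "delta lam n (n - (p1 - 1)) = (\<Sum>i\<in>{Suc (p1 - 1)..n}. conj lam i)"
        using delta_eq[of "n - (p1 - 1)"] kn p12 p1n by simp
      show ?thesis unfolding gens_last_def using True
        by (simp only: if_True p1_def[symmetric]) (rule memDCPG, use p1n p12 dl tp in auto)
    qed (simp add: gens_last_def)
  qed
  show ?thesis unfolding DCP_ideal_def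
    by (rule ideal_R_eqI) (use D_J J_D in \<open>auto intro: ideal_R_gen\<close>)
qed

end


lemma alt:
  assumes x: "x \<in> T" "x \<in> {1..n}" and f: "finite T"
    and I: "\<forall>r'\<in>{1..r}. esym r' T \<in> ideal_R n G"
  shows "esym r (T - {x}) - (- Var x) ^ r \<in> ideal_R n (G :: 'a::comm_ring_1 mpoly set)"
  using I
proof (induction r)
  case 0 then show ?case using f by (simp add: ideal_R_0)
next
  case (Suc r)
  have IH: "esym r (T - {x}) - (- Var x) ^ r \<in> ideal_R n G" using Suc by auto
  have eT: "esym (Suc r) T \<in> ideal_R n G" using Suc.prems by auto
  have eq: "esym (Suc r) (T - {x}) - (- Var x) ^ Suc r
      = esym (Suc r) T - Var x * (esym r (T - {x}) - (- Var x) ^ r :: 'a mpoly)"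
    using esym_remove[OF f x(1), of r, where 'a='a] by (simp add: algebra_simps)
  show ?case unfolding eq using x
    by (intro ideal_R_diff ideal_R_mult eT IH in_R_Var) auto
qed

lemma remove_one:
  assumes "S \<subseteq> {1..n}" "card S = n - 1" "1 \<le> n"
  obtains x where "x \<in> {1..n}" "S = {1..n} - {x}"
proof -
  have "\<not> {1..n} \<subseteq> S"
  proof
    assume "{1..n} \<subseteq> S"
    moreover have "finite S" using assms(1) by (rule finite_subset) simp
    ultimately have "card {1..n} \<le> card S" using card_mono by blast
    then show False using assms by simp
  qed
  then obtain x where x: "x \<in> {1..n}" "x \<notin> S" by blast
  have "S \<subseteq> {1..n} - {x}" using assms x by auto
  moreover have "card ({1..n} - {x}) = card S" using x assms by simp
  ultimately have "S = {1..n} - {x}" by (intro card_subset_eq) auto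
  then show ?thesis using that x by blast
qed

lemma neg_one_sq: "(-1::'a::comm_ring_1) ^ l * (-1) ^ l = 1"
  by (simp only: power_mult_distrib[symmetric]) simp

lemma neg_pow_eq: "(x::'a::comm_ring_1) ^ l = (-1) ^ l * (- x) ^ l"
proof -
  have "(- x) ^ l = (-1) ^ l * x ^ l" by (rule power_minus)
  then show ?thesis by (metis mult.assoc mult_1 neg_one_sq)
qed

lemma neg_pow_eq2: "(x::'a::comm_ring_1) * (- x) ^ l = - ((-1) ^ Suc l * x ^ Suc l)"
proof -
  have "(- x) ^ l = (-1) ^ l * x ^ l" by (rule power_minus)
  then show ?thesis by (simp only: power_Suc) (simp add: algebra_simps)
qed

context
  fixes lam :: "nat list" and n :: nat
  assumes P: "is_partition lam n"
begin

lemma claim2: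
  assumes n1: "1 \<le> n" and p1: "part lam 1 \<ge> 2" and p2: "part lam 2 \<ge> 2"
  shows "(DCP_ideal lam n :: 'a::field_char_0 mpoly set)
       = ideal_R n (gens_col0 lam n \<union> {Var i ^ bcol lam 1 | i. i \<in> {1..n}}
                             \<union> gens_cols lam n 2 \<union> gens_last lam n)"
proof -
  let ?G1 = "gens_col0 lam n \<union> gens_cols lam n 1 \<union> gens_last lam n :: 'a mpoly set"
  let ?G2 = "gens_col0 lam n \<union> {Var i ^ bcol lam 1 | i. i \<in> {1..n}}
                             \<union> gens_cols lam n 2 \<union> gens_last lam n :: 'a mpoly set"
  define l where "l = length lam"
  define T where "T = {1..n::nat}"
  have fT: "finite T" "card T = n" unfolding T_def by auto
  have D1: "(DCP_ideal lam n :: 'a mpoly set) = ideal_R n ?G1" by (rule claim1[OF P n1 p1])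
  have bl: "bcol lam 1 = l" using conj_1[OF P] unfolding bcol_eq[OF P] l_def by simp
  have l1: "1 \<le> l" using part_zero[OF P, of 1] p1 unfolding l_def by auto
  have t0: "(\<Sum>i\<in>{Suc 0..n}. conj lam i) = n" using conj_sum[OF P] by simp
  have ln: "l \<le> n"
    using tail_eq[OF P, of 1] conj_1[OF P] n1 unfolding l_def by simp
  have eT: "esym r T \<in> ideal_R n ?G1" if "1 \<le> r" "r \<le> n" for r
  proof -
    have "esyms n r n \<subseteq> (\<Union>m\<in>{1..n}. \<Union>r\<in>{r. r \<le> m \<and> m < r + delta lam n m}. esyms n r m)"
      by (rule memDCPG[OF P]) (use that t0 n1 in \<open>auto simp: delta_eq[OF P]\<close>)
    moreover have "esym r T \<in> esyms n r n" unfolding T_def by (rule esyms_mem) auto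
    ultimately have "esym r T \<in> (DCP_ideal lam n :: 'a mpoly set)" unfolding DCP_ideal_def by (blast intro: ideal_R_gen)
    then show ?thesis using D1 by simp
  qed
  have g21: "?G2 \<subseteq> ideal_R n ?G1"
  proof (intro Un_least)
    show "gens_col0 lam n \<subseteq> ideal_R n ?G1" by (auto intro: ideal_R_gen)
    show "gens_last lam n \<subseteq> ideal_R n ?G1" by (auto intro: ideal_R_gen)
    show "gens_cols lam n 2 \<subseteq> ideal_R n ?G1"
      unfolding gens_cols_def by (intro subsetI ideal_R_gen) auto
    show "{Var i ^ bcol lam 1 | i. i \<in> {1..n}} \<subseteq> ideal_R n ?G1"
    proof (intro subsetI)
      fix p :: "'a mpoly" assume "p \<in> {Var i ^ bcol lam 1 | i. i \<in> {1..n}}"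
      then obtain x where x: "x \<in> {1..n}" "p = Var x ^ l" using bl by auto
      have xT: "x \<in> T" using x T_def by simp
      have a: "esym l (T - {x}) - (- Var x) ^ l \<in> ideal_R n ?G1"
        by (rule alt[OF xT x(1) fT(1)]) (use eT ln in auto)
      have "esym l (T - {x}) \<in> esyms n (bcol lam 1) (n - 1)"
        unfolding bl T_def by (rule esyms_mem) (use x in auto)
      then have b: "esym l (T - {x}) \<in> ideal_R n ?G1"
        using p2 by (intro ideal_R_gen) (auto simp: gens_cols_def)
      have "(- Var x) ^ l \<in> ideal_R n ?G1" using ideal_R_diff[OF b a] by simp
      then have "(-1) ^ l * (- Var x) ^ l \<in> ideal_R n ?G1"
        by (intro ideal_R_mult in_R_power in_R_uminus in_R_1)
      then show "p \<in> ideal_R n ?G1" unfolding x(2) by (metis neg_pow_eq)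
    qed
  qed
  have g12: "?G1 \<subseteq> ideal_R n ?G2"
  proof (intro Un_least)
    show "gens_col0 lam n \<subseteq> ideal_R n ?G2" by (auto intro: ideal_R_gen)
    show "gens_last lam n \<subseteq> ideal_R n ?G2" by (auto intro: ideal_R_gen)
    have col: "esym r T \<in> ideal_R n ?G2" if "1 \<le> r" "r < l" for r
    proof -
      have "esym r T \<in> esyms n r n" unfolding T_def by (rule esyms_mem) auto
      then show ?thesis using that unfolding l_def by (intro ideal_R_gen) (auto simp: gens_col0_def)
    qed
    obtain l0 where l0: "l = Suc l0" using l1 by (cases l) auto
    have VX: "Var x * esym l0 (T - {x}) \<in> ideal_R n ?G2" if x: "x \<in> T" for x
    proof -
      have x1: "x \<in> {1..n}" using x T_def by simp
      have a: "esym l0 (T - {x}) - (- Var x) ^ l0 \<in> ideal_R n ?G2"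
        by (rule alt[OF x x1 fT(1)]) (use col l0 in auto)
      have "Var x ^ l \<in> ideal_R n ?G2" using x1 bl by (intro ideal_R_gen) auto
      then have b: "(-1) ^ Suc l0 * Var x ^ Suc l0 \<in> ideal_R n ?G2" unfolding l0
        by (intro ideal_R_mult in_R_power in_R_uminus in_R_1)
      have "Var x * (esym l0 (T - {x}) - (- Var x) ^ l0) - ((-1) ^ Suc l0 * Var x ^ Suc l0) \<in> ideal_R n ?G2"
        using x1 by (intro ideal_R_diff ideal_R_mult a b in_R_Var) auto
      moreover have "Var x * (esym l0 (T - {x}) - (- Var x) ^ l0) - ((-1) ^ Suc l0 * Var x ^ Suc l0)
          = Var x * (esym l0 (T - {x}) :: 'a mpoly)"
        unfolding right_diff_distrib neg_pow_eq2 by simp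
      ultimately show ?thesis by simp
    qed
    have "of_nat l * esym l T = (\<Sum>x\<in>T. Var x * (esym l0 (T - {x}) :: 'a mpoly))"
      using esym_E3[OF fT(1), of l0, where 'a='a] l0 by metis
    also have "\<dots> \<in> ideal_R n ?G2" using VX fT(1) by (intro ideal_R_sum) auto
    finally have elT: "esym l T \<in> ideal_R n ?G2" by (rule ideal_R_div) (use l1 in simp)
    show "gens_cols lam n 1 \<subseteq> ideal_R n ?G2"
    proof (intro subsetI)
      fix p :: "'a mpoly" assume "p \<in> gens_cols lam n 1"
      then obtain k where k: "k \<in> {1..<part lam 2}" and p: "p \<in> esyms n (bcol lam k) (n - k)"
        unfolding gens_cols_def by blast
      show "p \<in> ideal_R n ?G2"
      proof (cases "k = 1")
        case False
        then show ?thesis using k p by (intro ideal_R_gen) (auto simp: gens_cols_def)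
      next
        case True
        obtain S where S: "p = esym l S" "S \<subseteq> {1..n}" "card S = n - 1"
          using p True bl by (auto elim: esyms_elim)
        obtain x where x: "x \<in> {1..n}" "S = T - {x}" using remove_one[OF S(2,3) n1] T_def by blast
        have "p = esym l T - Var x * esym l0 (T - {x})"
          using esym_remove[OF fT(1), of x l0, where 'a='a] x S l0 T_def by simp
        also have "\<dots> \<in> ideal_R n ?G2" using elT VX x T_def by (intro ideal_R_diff) auto
        finally show ?thesis .
      qed
    qed
  qed
  show ?thesis unfolding D1 by (rule ideal_R_eqI[OF g12 g21])
qed

lemma claim3:
  assumes n1: "1 \<le> n" and p1: "part lam 1 = 1"
  shows "(DCP_ideal lam n :: 'a::field_char_0 mpoly set) = ideal_R n (gens_col0 lam n \<union> esyms n n n)"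
proof -
  let ?D = "(\<Union>m\<in>{1..n}. \<Union>r\<in>{r. r \<le> m \<and> m < r + delta lam n m}. esyms n r m) :: 'a mpoly set"
  let ?G = "gens_col0 lam n \<union> esyms n n n :: 'a mpoly set"
  have t0: "(\<Sum>i\<in>{Suc 0..n}. conj lam i) = n" using conj_sum[OF P] by simp
  have tz: "(\<Sum>i\<in>{Suc k..n}. conj lam i) = 0" if "1 \<le> k" for k
    using that p1 conj_zero[OF P] by (intro sum.neutral) auto
  have ln: "length lam = n" using tail_eq[OF P, of 1] tz[of 1] conj_1[OF P] n1 by simp
  have DG: "?D \<subseteq> ?G"
  proof
    fix g :: "'a mpoly" assume "g \<in> ?D"
    then obtain m r where mr: "m \<in> {1..n}" "r \<le> m" "m < r + delta lam n m" "g \<in> esyms n r m"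
      by blast
    define k where "k = n - m"
    have dl: "delta lam n m = (\<Sum>i\<in>{Suc k..n}. conj lam i)" using delta_eq[OF P, of m] mr(1) k_def by simp
    have "k = 0" using tz[of k] mr dl by (cases "k = 0") auto
    then have "m = n" "1 \<le> r" using mr dl t0 k_def by auto
    then show "g \<in> ?G" using mr ln by (cases "r = n") (auto simp: gens_col0_def)
  qed
  have GD: "?G \<subseteq> ?D"
  proof (intro Un_least)
    show "gens_col0 lam n \<subseteq> ?D"
      unfolding gens_col0_def
      by (intro UN_least memDCPG[OF P]) (use ln n1 t0 in \<open>auto simp: delta_eq[OF P]\<close>)
    show "esyms n n n \<subseteq> ?D"
      by (intro memDCPG[OF P]) (use n1 t0 in \<open>auto simp: delta_eq[OF P]\<close>)
  qed
  show ?thesis unfolding DCP_ideal_def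
    by (rule ideal_R_eqI) (use DG GD in \<open>auto intro: ideal_R_gen\<close>)
qed

end

lemma esym_single: "esym 1 {i} = (Var i :: 'a::comm_ring_1 mpoly)"
  using esym_insert[of "{}" i 0, where 'a='a] esym_big[of "{}" 1, where 'a='a] by simp

lemma esyms_11: "esyms n 1 1 = {Var i :: 'a::comm_ring_1 mpoly | i. i \<in> {1..n}}"
proof (intro equalityI subsetI)
  fix p :: "'a mpoly" assume "p \<in> esyms n 1 1"
  then obtain S where S: "p = esym 1 S" "S \<subseteq> {1..n}" "card S = 1" unfolding esyms_def by blast
  then obtain i where "S = {i}" by (auto simp: card_1_singleton_iff)
  then show "p \<in> {Var i | i. i \<in> {1..n}}" using S esym_single[of i, where 'a='a] by auto
next
  fix p :: "'a mpoly" assume "p \<in> {Var i | i. i \<in> {1..n}}"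
  then obtain i where i: "p = Var i" "i \<in> {1..n}" by blast
  have "esym 1 {i} \<in> esyms n 1 1" by (rule esyms_mem) (use i in auto)
  then show "p \<in> esyms n 1 1" using i esym_single[of i, where 'a='a] by metis
qed

theorem mainTheorem5:
  fixes lam :: "nat list" and n :: nat
  assumes "1 \<le> n" and "is_partition lam n"
  shows "(part lam 1 \<ge> 2 \<longrightarrow>
            (DCP_ideal lam n :: 'a::field_char_0 mpoly set)
              = ideal_R n (gens_col0 lam n \<union> gens_cols lam n 1 \<union> gens_last lam n))
       \<and> (part lam 1 \<ge> 2 \<and> part lam 2 \<ge> 2 \<longrightarrow>
            (DCP_ideal lam n :: 'a mpoly set)
              = ideal_R n (gens_col0 lam n \<union> {Var i ^ bcol lam 1 | i. i \<in> {1..n}}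
                             \<union> gens_cols lam n 2 \<union> gens_last lam n))
       \<and> (part lam 1 = 1 \<longrightarrow>
            (DCP_ideal lam n :: 'a mpoly set)
              = ideal_R n (gens_col0 lam n \<union> esyms n n n))
       \<and> (lam = [n] \<longrightarrow>
            (DCP_ideal lam n :: 'a mpoly set) = ideal_R n {Var i | i. i \<in> {1..n}})"
proof (intro conjI impI)
  show "part lam 1 \<ge> 2 \<Longrightarrow> (DCP_ideal lam n :: 'a::field_char_0 mpoly set)
              = ideal_R n (gens_col0 lam n \<union> gens_cols lam n 1 \<union> gens_last lam n)"
    by (rule claim1[OF assms(2,1)])
  show "part lam 1 \<ge> 2 \<and> part lam 2 \<ge> 2 \<Longrightarrow> (DCP_ideal lam n :: 'a mpoly set)
              = ideal_R n (gens_col0 lam n \<union> {Var i ^ bcol lam 1 | i. i \<in> {1..n}}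
                             \<union> gens_cols lam n 2 \<union> gens_last lam n)"
    using claim2[OF assms(2,1)] by blast
  show "part lam 1 = 1 \<Longrightarrow> (DCP_ideal lam n :: 'a mpoly set)
              = ideal_R n (gens_col0 lam n \<union> esyms n n n)"
    by (rule claim3[OF assms(2,1)])
  assume L: "lam = [n]"
  show "(DCP_ideal lam n :: 'a mpoly set) = ideal_R n {Var i | i. i \<in> {1..n}}"
  proof (cases "n = 1")
    case True
    have "(DCP_ideal lam n :: 'a mpoly set) = ideal_R n (gens_col0 lam n \<union> esyms n n n)"
      by (rule claim3[OF assms(2,1)]) (use L True in \<open>simp add: part_def\<close>)
    also have "gens_col0 lam n \<union> esyms n n n = (esyms n 1 1 :: 'a mpoly set)"
      using L True by (simp add: gens_col0_def)
    finally show ?thesis by (simp only: esyms_11)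
  next
    case False
    have "(DCP_ideal lam n :: 'a mpoly set) = ideal_R n (gens_col0 lam n \<union> gens_cols lam n 1 \<union> gens_last lam n)"
      by (rule claim1[OF assms(2,1)]) (use L False assms(1) in \<open>simp add: part_def\<close>)
    also have "gens_col0 lam n \<union> gens_cols lam n 1 \<union> gens_last lam n = (esyms n 1 1 :: 'a mpoly set)"
      using L False assms(1) by (simp add: gens_col0_def gens_cols_def gens_last_def part_def)
    finally show ?thesis by (simp only: esyms_11)
  qed
qed


end
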